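(* Let $A$, $f_A$, $f$, $h$, $F$, $H$ be as in the context. Suppose that $h(\mathcal{F}^u_f(p))=\mathcal{F}^u_{f_A}(h(p))$ for every $p\in\mathbb{T}^3$. Then $f$ is not accessible.
   Context: $A\in SL(3,\mathbb{Z})$ has eigenvalues $0<\lambda_1<1<\lambda_2<\lambda_3$; $f_A$ is the induced automorphism of $\mathbb{T}^3=\mathbb{R}^3/\mathbb{Z}^3$. $f$ is a diffeomorphism of $\mathbb{T}^3$ sufficiently $C^1$-close to $f_A$ so that it is Anosov, partially hyperbolic with one-dimensional strong stable, center and strong unstable bundles, and $h$ is the homeomorphism close to the identity with $h\circ f=f_A\circ h$. $\mathcal{F}^s_f,\mathcal{F}^u_f$ denote the strong stable and strong unstable foliations of $f$ and $\mathcal{F}^s_{f_A},\mathcal{F}^u_{f_A}$ those of $f_A$ (projections of the lines parallel to the $\lambda_1$- and $\lambda_3$-eigenlines). $f$ is accessible if any two points of $\mathbb{T}^3$ can be joined by a piecewise smooth path each of whose pieces lies in a single strong stable or strong unstable leaf of $f$. *)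

theory Defs
  imports "HOL-Analysis.Analysis"
begin

text \<open>We work on the universal cover R^3 of T^3 = R^3/Z^3, with Z^3-equivariant lifts.\<close>

definition int_vec :: "real^3 \<Rightarrow> bool" where
  "int_vec k \<longleftrightarrow> (\<forall>i. k $ i \<in> \<int>)"

text \<open>Z^3-saturation: preimage in R^3 of the projection of S to the torus.\<close>
definition zsat :: "(real^3) set \<Rightarrow> (real^3) set" where
  "zsat S = {z. \<exists>y\<in>S. int_vec (z - y)}"

definition realA :: "int^3^3 \<Rightarrow> real^3^3" where
  "realA A = (\<chi> i j. real_of_int (A $ i $ j))"

text \<open>F is a lift of a C^1 diffeomorphism f of T^3 in the homotopy class of f_A,
  with derivative matrix field F'.\<close>
definition torus_lift_diffeo :: "int^3^3 \<Rightarrow> (real^3 \<Rightarrow> real^3) \<Rightarrow> (real^3 \<Rightarrow> real^3^3) \<Rightarrow> bool" where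
  "torus_lift_diffeo A F F' \<longleftrightarrow>
     (\<forall>x. (F has_derivative (\<lambda>v. F' x *v v)) (at x)) \<and> continuous_on UNIV F' \<and>
     (\<forall>x. det (F' x) \<noteq> 0) \<and> bij F \<and>
     (\<forall>x k. int_vec k \<longrightarrow> F (x + k) = F x + realA A *v k)"

text \<open>H is a lift of a homeomorphism h of T^3 homotopic to the identity with h o f = f_A o h.\<close>
definition torus_conj :: "int^3^3 \<Rightarrow> (real^3 \<Rightarrow> real^3) \<Rightarrow> (real^3 \<Rightarrow> real^3) \<Rightarrow> bool" where
  "torus_conj A F H \<longleftrightarrow> (\<exists>G. homeomorphism UNIV UNIV H G) \<and>
     (\<forall>x k. int_vec k \<longrightarrow> H (x + k) = H x + k) \<and>
     (\<forall>x. H (F x) = realA A *v H x)"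

text \<open>Partially hyperbolic (and Anosov) splitting E^s + E^c + E^u into lines for the lift F,
  each line field given by a continuous nowhere-vanishing vector field, Z^3-periodic
  (so it descends to T^3), DF-invariant, with rates
  a1 <= b1 < a2 <= b2 < a3 <= b3, b1 < 1 < a2 (center expanding: f Anosov).\<close>
definition ph_splitting :: "(real^3 \<Rightarrow> real^3) \<Rightarrow> (real^3 \<Rightarrow> real^3) \<Rightarrow> (real^3 \<Rightarrow> real^3) \<Rightarrow> (real^3 \<Rightarrow> real^3) \<Rightarrow> bool" where
  "ph_splitting F es ec eu \<longleftrightarrow>
     (\<forall>e\<in>{es, ec, eu}.
        continuous_on UNIV e \<and> (\<forall>x. e x \<noteq> 0) \<and>
        (\<forall>x k. int_vec k \<longrightarrow> span {e (x + k)} = span {e x}) \<and>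
        (\<forall>x. frechet_derivative F (at x) (e x) \<in> span {e (F x)})) \<and>
     (\<forall>x. span {es x, ec x, eu x} = UNIV) \<and>
     (\<exists>C a1 b1 a2 b2 a3 b3. C > 0 \<and> 0 < a1 \<and> a1 \<le> b1 \<and> b1 < a2 \<and> a2 \<le> b2 \<and> b2 < a3 \<and> a3 \<le> b3 \<and>
        b1 < 1 \<and> 1 < a2 \<and>
        (\<forall>x n. a1 ^ n / C * norm (es x) \<le> norm (frechet_derivative (F ^^ n) (at x) (es x)) \<and>
               norm (frechet_derivative (F ^^ n) (at x) (es x)) \<le> C * b1 ^ n * norm (es x) \<and>
               a2 ^ n / C * norm (ec x) \<le> norm (frechet_derivative (F ^^ n) (at x) (ec x)) \<and>
               norm (frechet_derivative (F ^^ n) (at x) (ec x)) \<le> C * b2 ^ n * norm (ec x) \<and>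
               a3 ^ n / C * norm (eu x) \<le> norm (frechet_derivative (F ^^ n) (at x) (eu x)) \<and>
               norm (frechet_derivative (F ^^ n) (at x) (eu x)) \<le> C * b3 ^ n * norm (eu x)))"

text \<open>C^1 path on [0,1] everywhere tangent to the line field spanned by e.\<close>
definition tangent_path :: "(real^3 \<Rightarrow> real^3) \<Rightarrow> (real \<Rightarrow> real^3) \<Rightarrow> bool" where
  "tangent_path e \<gamma> \<longleftrightarrow> (\<exists>\<gamma>'. continuous_on {0..1} \<gamma>' \<and>
     (\<forall>t\<in>{0..1}. (\<gamma> has_vector_derivative \<gamma>' t) (at t within {0..1}) \<and> \<gamma>' t \<in> span {e (\<gamma> t)}))"

text \<open>Lifted leaf through x of the one-dimensional foliation tangent to the line field e.\<close>
definition leaf :: "(real^3 \<Rightarrow> real^3) \<Rightarrow> real^3 \<Rightarrow> (real^3) set" where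
  "leaf e x = {\<gamma> 1 | \<gamma>. tangent_path e \<gamma> \<and> \<gamma> 0 = x}"

text \<open>Lifted strong unstable leaf of f_A through x: line through x parallel to the
  eigenline of the eigenvalue l3.\<close>
definition lin_leaf :: "int^3^3 \<Rightarrow> real \<Rightarrow> real^3 \<Rightarrow> (real^3) set" where
  "lin_leaf A l x = {x + v | v. realA A *v v = l *\<^sub>R v}"

text \<open>Accessibility on T^3, read on the cover: any x can be joined by an su-path to
  some lift y + k of any other point y.\<close>
definition su_step :: "(real^3 \<Rightarrow> real^3) \<Rightarrow> (real^3 \<Rightarrow> real^3) \<Rightarrow> ((real^3) \<times> (real^3)) set" where
  "su_step es eu = {(x, y). y \<in> leaf es x \<or> y \<in> leaf eu x}"

definition accessible :: "(real^3 \<Rightarrow> real^3) \<Rightarrow> (real^3 \<Rightarrow> real^3) \<Rightarrow> bool" where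
  "accessible es eu \<longleftrightarrow> (\<forall>x y. \<exists>z. (x, z) \<in> (su_step es eu)\<^sup>* \<and> int_vec (z - y))"

end

theory Submission
  imports Defs
begin


lemma curve_bound:
  fixes g :: "real \<Rightarrow> real^3"
  assumes d: "\<And>t. t\<in>{0..1} \<Longrightarrow> (g has_vector_derivative g' t) (at t within {0..1})"
    and b: "\<And>t. t\<in>{0..1} \<Longrightarrow> norm (g' t) \<le> K" and K: "0 \<le> K"
  shows "norm (g 1 - g 0) \<le> K"
proof -
  have "norm (g 1 - g 0) \<le> K * norm (1 - 0::real)"
  proof (rule differentiable_bound[where S="{0..1}" and f'="\<lambda>t h. h *\<^sub>R g' t"])
    show "convex {0..1::real}" by simp
    show "(g has_derivative (\<lambda>h. h *\<^sub>R g' x)) (at x within {0..1})" if "x \<in> {0..1}" for x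
      using d[OF that] by (simp add: has_vector_derivative_def)
    show "onorm (\<lambda>h. h *\<^sub>R g' x) \<le> K" if "x \<in> {0..1}" for x
    proof (rule onorm_bound)
    fix h :: real
    have "\<bar>h\<bar> * norm (g' x) \<le> \<bar>h\<bar> * K" using b[OF that] by (simp add: mult_left_mono)
    then show "norm (h *\<^sub>R g' x) \<le> K * norm h" by (simp add: mult.commute)
  qed (use K in auto)
  qed auto
  then show ?thesis by simp
qed

lemma iter_diff:
  fixes F :: "real^3 \<Rightarrow> real^3"
  assumes "\<forall>x. (F has_derivative (\<lambda>v. F' x *v v)) (at x)"
  shows "(F ^^ n) differentiable (at x)"
proof (induction n arbitrary: x)
  case 0 have "(\<lambda>x. x) differentiable (at x)" by simp
  moreover have "F ^^ 0 = (\<lambda>x. x)" by (simp add: id_def)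
  ultimately show ?case by (metis (no_types))
next
  case (Suc n)
  have "F differentiable (at x)" using assms differentiable_def by blast
  then have "((F ^^ n) \<circ> F) differentiable (at x)"
    using Suc differentiable_chain_at by blast
  moreover have "F ^^ Suc n = (F ^^ n) \<circ> F" by (rule funpow_Suc_right)
  ultimately show ?case by (metis (no_types))
qed

lemma periodic_bounded:
  fixes H :: "real^3 \<Rightarrow> real^3"
  assumes c: "continuous_on UNIV H" and p: "\<forall>x k. int_vec k \<longrightarrow> H (x + k) = H x + k"
  shows "\<exists>M. \<forall>x. norm (H x - x) \<le> M"
proof -
  have "compact ((\<lambda>x. H x - x) ` cbox 0 1)"
    by (intro compact_continuous_image continuous_intros continuous_on_subset[OF c]) auto
  then obtain M where M: "\<forall>y\<in>cbox 0 1. norm (H y - y) \<le> M"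
    using compact_imp_bounded bounded_iff by (metis (no_types, lifting) image_eqI)
  show ?thesis
  proof (intro exI allI)
    fix x :: "real^3"
    define k :: "real^3" where "k = (\<chi> i. of_int \<lfloor>x$i\<rfloor>)"
    have ki: "int_vec k" unfolding int_vec_def k_def by auto
    have y: "x - k \<in> cbox 0 1" unfolding mem_box_cart k_def
      by (auto simp: of_int_floor_le) (smt (verit) real_of_int_floor_add_one_gt)
    have "H x = H (x - k) + k" using p ki by (metis diff_add_cancel)
    then have "H x - x = H (x - k) - (x - k)" by (simp add: algebra_simps)
    moreover have "norm (H (x - k) - (x - k)) \<le> M" using M y by blast
    ultimately show "norm (H x - x) \<le> M" by (metis \<open>H x - x = H (x - k) - (x - k)\<close>)
  qed
qed

lemma conj_iter:
  assumes "\<forall>x. H (F x) = B *v H x"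
  shows "H ((F ^^ n) x) = (((*v) B) ^^ n) (H x)"
  by (induction n) (auto simp: assms)



lemma stable_bounded:
  fixes F :: "real^3 \<Rightarrow> real^3" and es :: "real^3 \<Rightarrow> real^3"
  assumes dF: "\<forall>x. (F has_derivative (\<lambda>v. F' x *v v)) (at x)"
    and rate: "\<forall>x n. norm (frechet_derivative (F ^^ n) (at x) (es x)) \<le> C * b1 ^ n * norm (es x)"
    and b1: "0 < b1" "b1 < 1" and C: "0 < C"
    and zl: "z' \<in> leaf es z"
  shows "\<exists>K. \<forall>n. norm ((F^^n) z' - (F^^n) z) \<le> K"
proof -
  obtain \<gamma> where tp: "tangent_path es \<gamma>" and g0: "\<gamma> 0 = z" and g1: "\<gamma> 1 = z'"
    using zl unfolding leaf_def by auto
  then obtain \<gamma>' where cg: "continuous_on {0..1} \<gamma>'"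
    and dg: "\<And>t. t\<in>{0..1} \<Longrightarrow> (\<gamma> has_vector_derivative \<gamma>' t) (at t within {0..1})"
    and sg: "\<And>t. t\<in>{0..1} \<Longrightarrow> \<gamma>' t \<in> span {es (\<gamma> t)}"
    unfolding tangent_path_def by blast
  have "compact (\<gamma>' ` {0..1})" by (intro compact_continuous_image cg) auto
  then obtain L0 where L0: "\<forall>y\<in>\<gamma>' ` {0..1}. norm y \<le> L0"
    using compact_imp_bounded bounded_iff by metis
  define L where "L = max L0 0"
  have L: "\<And>t. t\<in>{0..1} \<Longrightarrow> norm (\<gamma>' t) \<le> L" "0 \<le> L" using L0 unfolding L_def by force+
  show ?thesis
  proof (intro exI allI)
    fix n
    let ?D = "\<lambda>t. frechet_derivative (F ^^ n) (at (\<gamma> t))"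
    have hd: "((F ^^ n) has_derivative ?D t) (at (\<gamma> t))" for t
      using iter_diff[OF dF] frechet_derivative_works by blast
    have "norm (((F ^^ n) \<circ> \<gamma>) 1 - ((F ^^ n) \<circ> \<gamma>) 0) \<le> C * L"
    proof (rule curve_bound[where g'="\<lambda>t. ?D t (\<gamma>' t)"])
      fix t :: real assume t: "t \<in> {0..1}"
      show "((F ^^ n) \<circ> \<gamma> has_vector_derivative ?D t (\<gamma>' t)) (at t within {0..1})"
        by (rule vector_derivative_diff_chain_within[OF dg[OF t]])
           (rule has_derivative_at_withinI[OF hd])
      obtain c where c: "\<gamma>' t = c *\<^sub>R es (\<gamma> t)" using sg[OF t] by (auto simp: span_singleton)
      have lin: "linear (?D t)" using hd has_derivative_linear by blast
      have "?D t (\<gamma>' t) = c *\<^sub>R ?D t (es (\<gamma> t))" using c linear.scaleR[OF lin] by simp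
      then have "norm (?D t (\<gamma>' t)) = \<bar>c\<bar> * norm (?D t (es (\<gamma> t)))" by simp
      also have "\<dots> \<le> \<bar>c\<bar> * (C * b1 ^ n * norm (es (\<gamma> t)))"
        using rate by (intro mult_left_mono) auto
      also have "\<dots> \<le> \<bar>c\<bar> * (C * 1 * norm (es (\<gamma> t)))"
        using b1 C by (intro mult_left_mono mult_right_mono power_le_one) auto
      also have "\<dots> = C * norm (\<gamma>' t)" using c by simp
      also have "\<dots> \<le> C * L" using L(1)[OF t] C by simp
      finally show "norm (?D t (\<gamma>' t)) \<le> C * L" .
    qed (use C L in auto)
    then show "norm ((F^^n) z' - (F^^n) z) \<le> C * L" using g0 g1 by simp
  qed
qed



definition bS :: "real^3^3 \<Rightarrow> (real^3) set" where
  "bS B = {w. \<exists>K. \<forall>n. norm (((*v) B ^^ n) w) \<le> K}"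

lemma it_add:
  fixes B :: "real^3^3"
  shows "((*v) B ^^ n) (a + b) = ((*v) B ^^ n) a + ((*v) B ^^ n) (b::real^3)"
  by (induction n) (auto simp: matrix_vector_right_distrib)

lemma it_scale:
  fixes B :: "real^3^3"
  shows "((*v) B ^^ n) (c *\<^sub>R a) = c *\<^sub>R ((*v) B ^^ n) (a::real^3)"
  by (induction n) (auto simp: matrix_vector_mult_scaleR)

lemma it_diff:
  fixes B :: "real^3^3"
  shows "((*v) B ^^ n) (a - b) = ((*v) B ^^ n) a - ((*v) B ^^ n) (b::real^3)"
  using it_add[where B=B and n=n and a="a - b" and b=b] by simp

lemma it_B:
  fixes B :: "real^3^3"
  shows "((*v) B ^^ n) (B *v w) = B *v (((*v) B ^^ n) (w::real^3))"
  by (metis funpow_swap1)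

lemma it_eig:
  fixes B :: "real^3^3"
  shows "B *v v = l *\<^sub>R v \<Longrightarrow> ((*v) B ^^ n) v = l ^ n *\<^sub>R (v::real^3)"
  by (induction n) (auto simp: matrix_vector_mult_scaleR)

lemma bS_add:
  fixes B :: "real^3^3"
  shows "a \<in> bS B \<Longrightarrow> b \<in> bS B \<Longrightarrow> a + b \<in> bS B"
  unfolding bS_def
proof clarsimp
  fix K1 K2 assume "\<forall>n. norm (((*v) B ^^ n) a) \<le> K1" "\<forall>n. norm (((*v) B ^^ n) b) \<le> K2"
  then show "\<exists>K. \<forall>n. norm (((*v) B ^^ n) (a + b)) \<le> K"
    by (intro exI[of _ "K1 + K2"]) (metis it_add norm_triangle_le add_mono)
qed

lemma bS_scale:
  fixes B :: "real^3^3"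
  shows "a \<in> bS B \<Longrightarrow> c *\<^sub>R a \<in> bS B"
proof -
  assume "a \<in> bS B"
  then obtain K1 where K: "\<forall>n. norm (((*v) B ^^ n) a) \<le> K1" unfolding bS_def by auto
  have "norm (((*v) B ^^ n) (c *\<^sub>R a)) \<le> \<bar>c\<bar> * K1" for n
    using K by (simp add: it_scale mult_left_mono)
  then show ?thesis unfolding bS_def by auto
qed

lemma bS_B:
  fixes B :: "real^3^3"
  shows "a \<in> bS B \<Longrightarrow> B *v a \<in> bS B"
  unfolding bS_def
proof clarsimp
  fix K1 assume K: "\<forall>n. norm (((*v) B ^^ n) a) \<le> K1"
  have "((*v) B ^^ n) (B *v a) = ((*v) B ^^ Suc n) a" for n
    by (simp add: it_B)
  then show "\<exists>K. \<forall>n. norm (((*v) B ^^ n) (B *v a)) \<le> K"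
    using K by metis
qed

lemma key_inj:
  fixes B :: "real^3^3"
  assumes v2: "v2 \<noteq> 0" "B *v v2 = l2 *\<^sub>R v2" and l: "1 < l2" "l2 \<noteq> l3"
    and s: "s \<in> bS B" and u: "B *v u = l3 *\<^sub>R u" and e: "a *\<^sub>R v2 = s + u"
  shows "a = 0"
proof (rule ccontr)
  assume a: "a \<noteq> 0"
  have "B *v s - l3 *\<^sub>R s = (a * (l2 - l3)) *\<^sub>R v2"
  proof -
    have se: "s = a *\<^sub>R v2 - u" using e by simp
    have "B *v (a *\<^sub>R v2 - u) - l3 *\<^sub>R (a *\<^sub>R v2 - u) = (a * (l2 - l3)) *\<^sub>R v2"
      using v2 u by (simp add: matrix_vector_mult_diff_distrib matrix_vector_mult_scaleR algebra_simps)
    then show ?thesis using se by simp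
  qed
  moreover have "B *v s - l3 *\<^sub>R s \<in> bS B"
    using bS_add[OF bS_B[OF s] bS_scale[OF s, of "-l3"]] by simp
  ultimately obtain K where K: "\<And>n. norm (((*v) B ^^ n) ((a * (l2 - l3)) *\<^sub>R v2)) \<le> K"
    unfolding bS_def by auto
  define c where "c = \<bar>a * (l2 - l3)\<bar> * norm v2"
  have c: "c > 0" using a l v2 unfolding c_def by auto
  have "l2 ^ n * c \<le> K" for n
    using K[of n] it_eig[OF v2(2), of n] l unfolding c_def
    by (simp add: it_scale abs_mult mult_ac)
  moreover obtain n where "K / c < l2 ^ n" using real_arch_pow[OF l(1)] by blast
  ultimately show False using c by (smt (verit) pos_divide_less_eq)
qed

lemma countable_intvec: "countable {k::real^3. int_vec k}"
proof -
  have "{k::real^3. int_vec k} \<subseteq> (\<lambda>z::int^3. \<chi> i. of_int (z$i)) ` UNIV"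
  proof
    fix k :: "real^3" assume "k \<in> {k. int_vec k}"
    then have "\<forall>i. \<exists>m::int. k$i = of_int m" unfolding int_vec_def by (auto elim!: Ints_cases)
    then obtain m where "\<forall>i. k$i = of_int (m i)" by metis
    then have "k = (\<chi> i. of_int ((\<chi> i. m i)$i))" by (simp add: vec_eq_iff)
    then show "k \<in> range (\<lambda>z::int^3. \<chi> i. of_int (z$i))" by blast
  qed
  then show ?thesis by (rule countable_subset) simp
qed



theorem mainTheorem2:
  fixes A :: "int^3^3" and l1 l2 l3 :: real
  assumes "det A = 1"
    and "0 < l1" and "l1 < 1" and "1 < l2" and "l2 < l3"
    and "\<forall>l\<in>{l1, l2, l3}. \<exists>v. v \<noteq> 0 \<and> realA A *v v = l *\<^sub>R v"
  shows "\<exists>\<epsilon>>0. \<forall>F F'.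
     torus_lift_diffeo A F F' \<and>
     (\<forall>x. norm (F x - realA A *v x) < \<epsilon> \<and> norm (F' x - realA A) < \<epsilon>) \<longrightarrow>
     (\<forall>es ec eu. ph_splitting F es ec eu \<longrightarrow>
       (\<forall>H. torus_conj A F H \<longrightarrow>
          (\<forall>p. zsat (H ` leaf eu p) = zsat (lin_leaf A l3 (H p))) \<longrightarrow>
          \<not> accessible es eu))"
proof (intro exI[of _ "1::real"] conjI allI impI)
  define B where "B = realA A"
  obtain v2 where v2: "v2 \<noteq> 0" "B *v v2 = l2 *\<^sub>R v2" using assms(6) unfolding B_def by auto
  define Q where "Q = {s + u + k | s u k. s \<in> bS B \<and> B *v u = l3 *\<^sub>R u \<and> int_vec k}"
  have intadd: "int_vec (a + b)" if "int_vec a" "int_vec b" for a b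
    using that unfolding int_vec_def by auto
  have intdiff: "int_vec (a - b)" if "int_vec a" "int_vec b" for a b
    using that unfolding int_vec_def by auto
  have int0: "int_vec 0" unfolding int_vec_def by auto
  have Qadd: "a + b \<in> Q" if "a \<in> Q" "b \<in> Q" for a b
  proof -
    obtain s u k where a: "a = s + u + k" "s \<in> bS B" "B *v u = l3 *\<^sub>R u" "int_vec k"
      using \<open>a \<in> Q\<close> unfolding Q_def by auto
    obtain s' u' k' where b: "b = s' + u' + k'" "s' \<in> bS B" "B *v u' = l3 *\<^sub>R u'" "int_vec k'"
      using \<open>b \<in> Q\<close> unfolding Q_def by auto
    have "a + b = (s + s') + (u + u') + (k + k')" using a b by (simp add: algebra_simps)
    moreover have "B *v (u + u') = l3 *\<^sub>R (u + u')"
      using a b by (simp add: matrix_vector_right_distrib scaleR_add_right)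
    ultimately show ?thesis unfolding Q_def using a b bS_add intadd by blast
  qed
  have Qsubk: "a - k \<in> Q" if "a \<in> Q" "int_vec k" for a k
  proof -
    obtain s u k' where a: "a = s + u + k'" "s \<in> bS B" "B *v u = l3 *\<^sub>R u" "int_vec k'"
      using \<open>a \<in> Q\<close> unfolding Q_def by auto
    have "a - k = s + u + (k' - k)" using a by simp
    then show ?thesis unfolding Q_def using a intdiff that by blast
  qed
  \<comment> \<open>some t with t v2 outside Q\<close>
  obtain t where t: "t *\<^sub>R v2 \<notin> Q"
  proof -
    define T where "T = {t. t *\<^sub>R v2 \<in> Q}"
    have "\<forall>t\<in>T. \<exists>k. int_vec k \<and> (\<exists>s u. s \<in> bS B \<and> B *v u = l3 *\<^sub>R u \<and> t *\<^sub>R v2 = s + u + k)"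
    proof
      fix t assume "t \<in> T"
      then have "t *\<^sub>R v2 \<in> Q" unfolding T_def by simp
      then obtain s u k where "t *\<^sub>R v2 = s + u + k" "s \<in> bS B" "B *v u = l3 *\<^sub>R u" "int_vec k"
        unfolding Q_def by auto
      then show "\<exists>k. int_vec k \<and> (\<exists>s u. s \<in> bS B \<and> B *v u = l3 *\<^sub>R u \<and> t *\<^sub>R v2 = s + u + k)"
        by blast
    qed
    then obtain kf where kf0: "\<forall>t\<in>T. int_vec (kf t) \<and>
        (\<exists>s u. s \<in> bS B \<and> B *v u = l3 *\<^sub>R u \<and> t *\<^sub>R v2 = s + u + kf t)"
      by (rule bchoice[THEN exE])
    then have kf: "\<And>t. t \<in> T \<Longrightarrow> int_vec (kf t) \<and>
        (\<exists>s u. s \<in> bS B \<and> B *v u = l3 *\<^sub>R u \<and> t *\<^sub>R v2 = s + u + kf t)"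
      by blast
    have "inj_on kf T"
    proof (rule inj_onI)
      fix t t' assume tt: "t \<in> T" "t' \<in> T" "kf t = kf t'"
      obtain s u where su: "s \<in> bS B" "B *v u = l3 *\<^sub>R u" "t *\<^sub>R v2 = s + u + kf t"
        using kf[OF tt(1)] by blast
      obtain s' u' where su': "s' \<in> bS B" "B *v u' = l3 *\<^sub>R u'" "t' *\<^sub>R v2 = s' + u' + kf t'"
        using kf[OF tt(2)] by blast
      have e: "(t - t') *\<^sub>R v2 = (s + (-1) *\<^sub>R s') + (u - u')"
        using su(3) su'(3) tt(3) by (simp add: algebra_simps)
      have "s + (-1) *\<^sub>R s' \<in> bS B" using bS_add bS_scale su su' by blast
      moreover have "B *v (u - u') = l3 *\<^sub>R (u - u')"
        using su su' by (simp add: matrix_vector_mult_diff_distrib scaleR_diff_right)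
      ultimately have "t - t' = 0"
        using key_inj[where ?l3.0=l3, OF v2 assms(4) _ _ _ e] assms(5) by auto
      then show "t = t'" by simp
    qed
    moreover have "kf ` T \<subseteq> {k. int_vec k}" using kf by auto
    ultimately have "countable T"
      using countable_image_inj_on[of kf T] countable_subset[OF _ countable_intvec] by blast
    then have "T \<noteq> UNIV" using uncountable_UNIV_real by auto
    then show ?thesis using that unfolding T_def by auto
  qed
  fix F F' es ec eu H
  assume FF: "torus_lift_diffeo A F F' \<and>
     (\<forall>x. norm (F x - realA A *v x) < 1 \<and> norm (F' x - realA A) < 1)"
    and ph: "ph_splitting F es ec eu" and tc: "torus_conj A F H"
    and uf: "\<forall>p. zsat (H ` leaf eu p) = zsat (lin_leaf A l3 (H p))"
  have dF: "\<forall>x. (F has_derivative (\<lambda>v. F' x *v v)) (at x)"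
    using FF unfolding torus_lift_diffeo_def by blast
  obtain G where hom: "homeomorphism UNIV UNIV H G"
    and per: "\<forall>x k. int_vec k \<longrightarrow> H (x + k) = H x + k"
    and cj: "\<forall>x. H (F x) = B *v H x"
    using tc unfolding torus_conj_def B_def by blast
  have Hc: "continuous_on UNIV H" using hom unfolding homeomorphism_def by blast
  have HG: "\<And>y. H (G y) = y" using hom unfolding homeomorphism_def by blast
  obtain M where M: "\<And>x. norm (H x - x) \<le> M" using periodic_bounded[OF Hc per] by blast
  obtain C a1 b1 where C: "0 < C" "0 < a1" "a1 \<le> b1" "b1 < 1"
    and rate: "\<forall>x n. norm (frechet_derivative (F ^^ n) (at x) (es x)) \<le> C * b1 ^ n * norm (es x)"
  proof -
    have "\<exists>C a1 b1 a2 b2 a3 b3. C > 0 \<and> 0 < a1 \<and> a1 \<le> b1 \<and> b1 < a2 \<and> a2 \<le> b2 \<and> b2 < a3 \<and> a3 \<le> b3 \<and>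
        b1 < 1 \<and> 1 < a2 \<and>
        (\<forall>x n. a1 ^ n / C * norm (es x) \<le> norm (frechet_derivative (F ^^ n) (at x) (es x)) \<and>
               norm (frechet_derivative (F ^^ n) (at x) (es x)) \<le> C * b1 ^ n * norm (es x) \<and>
               a2 ^ n / C * norm (ec x) \<le> norm (frechet_derivative (F ^^ n) (at x) (ec x)) \<and>
               norm (frechet_derivative (F ^^ n) (at x) (ec x)) \<le> C * b2 ^ n * norm (ec x) \<and>
               a3 ^ n / C * norm (eu x) \<le> norm (frechet_derivative (F ^^ n) (at x) (eu x)) \<and>
               norm (frechet_derivative (F ^^ n) (at x) (eu x)) \<le> C * b3 ^ n * norm (eu x))"
      using ph unfolding ph_splitting_def by (rule conjunct2[THEN conjunct2])
    then obtain C a1 b1 where "C > 0" "0 < a1" "a1 \<le> b1" "b1 < 1"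
      and r: "\<forall>x n. norm (frechet_derivative (F ^^ n) (at x) (es x)) \<le> C * b1 ^ n * norm (es x)"
      by (elim exE conjE) blast
    then show ?thesis using that by blast
  qed
  have stab: "H z' - H z \<in> bS B" if zl: "z' \<in> leaf es z" for z z'
  proof -
    obtain K where K: "\<And>n. norm ((F^^n) z' - (F^^n) z) \<le> K"
      using stable_bounded[OF dF rate _ C(4) C(1) zl] C by (meson less_le_trans)
    have "norm (((*v) B ^^ n) (H z' - H z)) \<le> K + 2 * M" for n
    proof -
      have "((*v) B ^^ n) (H z' - H z) = H ((F^^n) z') - H ((F^^n) z)"
        by (simp add: it_diff conj_iter[OF cj])
      also have "\<dots> = (H ((F^^n) z') - (F^^n) z') - (H ((F^^n) z) - (F^^n) z) + ((F^^n) z' - (F^^n) z)"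
        by (simp add: algebra_simps)
      finally have "norm (((*v) B ^^ n) (H z' - H z)) \<le>
          norm (H ((F^^n) z') - (F^^n) z') + norm (H ((F^^n) z) - (F^^n) z) + norm ((F^^n) z' - (F^^n) z)"
        by (smt (verit) norm_triangle_ineq norm_triangle_ineq4)
      then show ?thesis using M[of "(F^^n) z'"] M[of "(F^^n) z"] K[of n] by linarith
    qed
    then show ?thesis unfolding bS_def by blast
  qed
  have unst: "H z' - H z \<in> Q" if "z' \<in> leaf eu z" for z z'
  proof -
    have "H z' \<in> zsat (H ` leaf eu z)" unfolding zsat_def using that int0 by force
    then have "H z' \<in> zsat (lin_leaf A l3 (H z))" using uf by simp
    then obtain y0 where y0: "y0 \<in> lin_leaf A l3 (H z)" "int_vec (H z' - y0)"
      unfolding zsat_def by blast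
    then obtain v where v: "y0 = H z + v" "B *v v = l3 *\<^sub>R v"
      unfolding lin_leaf_def B_def by blast
    have "H z' - H z = 0 + v + (H z' - y0)" using v by simp
    moreover have "(0::real^3) \<in> bS B" unfolding bS_def
      using it_scale[where c=0 and a=0] by auto
    ultimately show ?thesis unfolding Q_def using v y0 by blast
  qed
  have reach: "H z - H x \<in> Q" if "(x, z) \<in> (su_step es eu)\<^sup>*" for x z
    using that
  proof (induction rule: rtrancl_induct)
    case base
    have "(0::real^3) \<in> bS B" unfolding bS_def
      using it_scale[where c=0 and a=0] by auto
    moreover have "H x - H x = 0 + 0 + 0" by simp
    moreover have "B *v 0 = l3 *\<^sub>R (0::real^3)" by simp
    ultimately show ?case unfolding Q_def using int0 by blast
  next
    case (step y z)
    have "H z - H y \<in> Q"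
    proof (cases "z \<in> leaf es y")
      case True
      have "H z - H y = (H z - H y) + 0 + 0" by simp
      moreover have "B *v 0 = l3 *\<^sub>R (0::real^3)" by simp
      ultimately show ?thesis unfolding Q_def using stab[OF True] int0 by blast
    next
      case False
      then have "z \<in> leaf eu y" using step(2) unfolding su_step_def by auto
      then show ?thesis by (rule unst)
    qed
    from Qadd[OF step(3) this] show ?case by simp
  qed
  show "\<not> accessible es eu"
  proof
    assume acc: "accessible es eu"
    define x :: "real^3" where "x = 0"
    define y where "y = G (H x + t *\<^sub>R v2)"
    obtain z where z: "(x, z) \<in> (su_step es eu)\<^sup>*" "int_vec (z - y)"
      using acc unfolding accessible_def by blast
    have "H (y + (z - y)) = H y + (z - y)" using per z(2) by blast
    then have "H z = H y + (z - y)" by simp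
    moreover have "H y = H x + t *\<^sub>R v2" unfolding y_def by (rule HG)
    ultimately have "t *\<^sub>R v2 = (H z - H x) - (z - y)" by simp
    moreover have "(H z - H x) - (z - y) \<in> Q" using Qsubk[OF reach[OF z(1)] z(2)] .
    ultimately show False using t by simp
  qed
qed simp

end
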